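(* For every $x\in\mathrm{mon}(\mathcal{B})$, \[ \limsup_{N\to\infty}\frac1{\log N}\sum_{n=1}^N(x^*_n)^2\le1, \] where $x^*$ is the decreasing rearrangement of $(|x_n|)_{n\in\mathbb{N}}$.
   Context: For $N\in\mathbb{N}$, $\mathcal{B}_N$ is the space of functions $f\colon\{-1,1\}^N\to\mathbb{R}$ with sup norm and Fourier–Walsh coefficients $\widehat f(S)=2^{-N}\sum_xf(x)x^S$, $x^S=\prod_{n\in S}x_n$; $\mathcal{B}=\bigcup_N\mathcal{B}_N$. $\mathrm{mon}(\mathcal{B})$ is the set of $x\in\mathbb{R}^{\mathbb{N}}$ for which there is $C>0$ such that $\sum_{S\subset\{1,\dots,N\}}|\widehat f(S)x^S|\le C\|f\|_\infty$ for all $N$ and all $f\in\mathcal{B}_N$. (Elements of $\mathrm{mon}(\mathcal{B})$ tend to $0$, so the decreasing rearrangement is well defined.) $\log$ is natural. *)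

theory Defs
  imports "HOL-Analysis.Analysis" "HOL-Library.Liminf_Limsup"
begin

definition bcube :: "nat \<Rightarrow> (nat \<Rightarrow> real) set" where
  "bcube N = ({1..N} \<rightarrow>\<^sub>E {-1, 1})"

definition supnorm :: "nat \<Rightarrow> ((nat \<Rightarrow> real) \<Rightarrow> real) \<Rightarrow> real" where
  "supnorm N f = Max ((\<lambda>y. \<bar>f y\<bar>) ` bcube N)"

definition walsh_coeff :: "nat \<Rightarrow> ((nat \<Rightarrow> real) \<Rightarrow> real) \<Rightarrow> nat set \<Rightarrow> real" where
  "walsh_coeff N f S = (\<Sum>y\<in>bcube N. f y * (\<Prod>n\<in>S. y n)) / 2 ^ N"

text \<open>The set mon(B) of sequences x = (x_n)_{n \<ge> 1} (the value x 0 is irrelevant).\<close>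
definition monB :: "(nat \<Rightarrow> real) set" where
  "monB = {x. \<exists>C>0. \<forall>N. \<forall>f :: (nat \<Rightarrow> real) \<Rightarrow> real.
      (\<Sum>S\<in>Pow {1..N}. \<bar>walsh_coeff N f S * (\<Prod>n\<in>S. x n)\<bar>) \<le> C * supnorm N f}"

definition decr_rearr :: "(nat \<Rightarrow> real) \<Rightarrow> nat \<Rightarrow> real" where
  "decr_rearr x n = Inf {Sup {\<bar>x k\<bar> | k. k \<ge> 1 \<and> k \<notin> J} | J. J \<subseteq> {1..} \<and> finite J \<and> card J < n}"

end

theory Submission imports Defs begin

lemma bcube_finite: "finite (bcube N)" by (simp add: bcube_def finite_PiE)
lemma bcube_ne: "bcube N \<noteq> {}" by (simp add: bcube_def PiE_eq_empty_iff)
lemma bcube_card: "card (bcube N) = 2^N" unfolding bcube_def by (simp add: card_PiE eval_nat_numeral)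
lemma bcube_sq: "y \<in> bcube N \<Longrightarrow> j \<in> {1..N} \<Longrightarrow> (y j)^2 = 1"
proof -
  assume "y \<in> bcube N" "j \<in> {1..N}"
  then have "y j \<in> {-1,1}" unfolding bcube_def by blast
  then show ?thesis by auto
qed

lemma walsh_sum:
 "(\<Sum>S\<in>Pow {1..N}. c S * walsh_coeff N f S) = (\<Sum>y\<in>bcube N. f y * (\<Sum>S\<in>Pow {1..N}. c S * (\<Prod>n\<in>S. y n))) / 2^N"
  unfolding walsh_coeff_def
  apply (simp add: sum_divide_distrib[symmetric] sum_distrib_left sum_distrib_right mult_ac)
  apply (rule sum.swap)
  done

lemma supnorm_sgn: "supnorm N (\<lambda>y. sgn (h y)) \<le> 1"
  unfolding supnorm_def using bcube_finite bcube_ne by (auto simp: Max_le_iff sgn_real_def)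

lemma l1_bound:
  assumes H: "\<And>f. (\<Sum>S\<in>Pow {1..N}. \<bar>walsh_coeff N f S * (\<Prod>n\<in>S. x n)\<bar>) \<le> C * supnorm N f"
  and C: "C \<ge> 0" and c: "\<And>S. \<bar>c S\<bar> \<le> 1"
  shows "(\<Sum>y\<in>bcube N. \<bar>\<Sum>S\<in>Pow {1..N}. c S * (\<Prod>n\<in>S. x n) * (\<Prod>n\<in>S. y n)\<bar>) \<le> 2^N * C"
proof -
  define h where "h y = (\<Sum>S\<in>Pow {1..N}. c S * (\<Prod>n\<in>S. x n) * (\<Prod>n\<in>S. y n))" for y
  define f where "f y = sgn (h y)" for y
  have "(\<Sum>y\<in>bcube N. \<bar>h y\<bar>) = (\<Sum>y\<in>bcube N. f y * (\<Sum>S\<in>Pow {1..N}. (c S * (\<Prod>n\<in>S. x n)) * (\<Prod>n\<in>S. y n)))"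
    by (auto simp: f_def h_def intro!: sum.cong simp: abs_sgn mult.commute)
  also have "\<dots> = 2^N * (\<Sum>S\<in>Pow {1..N}. (c S * (\<Prod>n\<in>S. x n)) * walsh_coeff N f S)"
    using walsh_sum[of "\<lambda>S. c S * prod x S" N f] by simp
  finally have 1: "(\<Sum>y\<in>bcube N. \<bar>h y\<bar>) = 2^N * (\<Sum>S\<in>Pow {1..N}. (c S * (\<Prod>n\<in>S. x n)) * walsh_coeff N f S)" .
  have 2: "(\<Sum>S\<in>Pow {1..N}. (c S * (\<Prod>n\<in>S. x n)) * walsh_coeff N f S) \<le> (\<Sum>S\<in>Pow {1..N}. \<bar>walsh_coeff N f S * (\<Prod>n\<in>S. x n)\<bar>)"
  proof (rule sum_mono)
    fix S
    have "(c S * (\<Prod>n\<in>S. x n)) * walsh_coeff N f S \<le> \<bar>c S\<bar> * \<bar>walsh_coeff N f S * (\<Prod>n\<in>S. x n)\<bar>"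
      by (metis abs_ge_self abs_mult mult.commute mult.left_commute)
    also have "\<dots> \<le> \<bar>walsh_coeff N f S * (\<Prod>n\<in>S. x n)\<bar>"
      using c[of S] by (simp add: mult_left_le_one_le)
    finally show "(c S * (\<Prod>n\<in>S. x n)) * walsh_coeff N f S \<le> \<bar>walsh_coeff N f S * (\<Prod>n\<in>S. x n)\<bar>" .
  qed
  have 3: "C * supnorm N f \<le> C"
    using supnorm_sgn[of N h] C unfolding f_def by (simp add: mult_left_le)
  have "(\<Sum>y\<in>bcube N. \<bar>h y\<bar>) \<le> 2^N * C"
    unfolding 1 using 2 H[of f] 3 by simp
  then show ?thesis unfolding h_def .
qed

lemma prod_ge_sum: "(1::real) + (\<Sum>j=1..(N::nat). (x j)^2) \<le> (\<Prod>j=1..N. 1 + (x j)^2)"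
proof (induction N)
  case 0 then show ?case by simp
next
  case (Suc N)
  have p: "(\<Prod>j=1..N. 1 + (x j)^2) \<ge> 1" by (rule prod_ge_1) simp
  have "(1::real) + (\<Sum>j=1..Suc N. (x j)^2) = (1 + (\<Sum>j=1..N. (x j)^2)) + (x (Suc N))^2" by simp
  also have "\<dots> \<le> (\<Prod>j=1..N. 1 + (x j)^2) + (\<Prod>j=1..N. 1 + (x j)^2) * (x (Suc N))^2"
    using Suc mult_right_mono[OF p, of "(x (Suc N))^2"] by (intro add_mono) auto
  also have "\<dots> = (\<Prod>j=1..Suc N. 1 + (x j)^2)" by (simp add: algebra_simps)
  finally show ?case .
qed

lemma sum_sq_bound:
  assumes H: "\<And>f. (\<Sum>S\<in>Pow {1..N}. \<bar>walsh_coeff N f S * (\<Prod>n\<in>S. x n)\<bar>) \<le> C * supnorm N f"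
  and C: "C \<ge> 0"
  shows "(\<Sum>j=1..N. (x j)^2) \<le> 4 * C^2"
proof -
  define P where "P y = (\<Prod>j\<in>{1..N}. (\<i> * complex_of_real (x j * y j) + 1))" for y
  have expand: "P y = (\<Sum>S\<in>Pow {1..N}. \<i>^card S * complex_of_real ((\<Prod>n\<in>S. x n) * (\<Prod>n\<in>S. y n)))" for y
    unfolding P_def
    apply (subst prod_add, simp)
    by (simp add: prod.distrib of_real_prod)
  have reim: "Re (\<i>^k * complex_of_real r) = Re (\<i>^k) * r" "Im (\<i>^k * complex_of_real r) = Im (\<i>^k) * r" for k r
    by simp_all
  have ReP: "Re (P y) = (\<Sum>S\<in>Pow {1..N}. Re (\<i>^card S) * (\<Prod>n\<in>S. x n) * (\<Prod>n\<in>S. y n))" for y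
    unfolding expand Re_sum reim mult.assoc ..
  have ImP: "Im (P y) = (\<Sum>S\<in>Pow {1..N}. Im (\<i>^card S) * (\<Prod>n\<in>S. x n) * (\<Prod>n\<in>S. y n))" for y
    unfolding expand Im_sum reim mult.assoc ..
  have cRe: "\<bar>Re (\<i>^k)\<bar> \<le> 1" for k
    by (metis abs_Re_le_cmod norm_ii norm_power power_one)
  have cIm: "\<bar>Im (\<i>^k)\<bar> \<le> 1" for k
    by (metis abs_Im_le_cmod norm_ii norm_power power_one)
  have bRe: "(\<Sum>y\<in>bcube N. \<bar>Re (P y)\<bar>) \<le> 2^N * C"
    unfolding ReP by (rule l1_bound[OF H C cRe])
  have bIm: "(\<Sum>y\<in>bcube N. \<bar>Im (P y)\<bar>) \<le> 2^N * C"
    unfolding ImP by (rule l1_bound[OF H C cIm])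
  define R where "R = (\<Prod>j\<in>{1..N}. sqrt (1 + (x j)^2))"
  have normP: "cmod (P y) = R" if y: "y \<in> bcube N" for y
  proof -
    have "cmod (P y) = (\<Prod>j\<in>{1..N}. cmod (\<i> * complex_of_real (x j * y j) + 1))"
      unfolding P_def by (simp add: prod_norm)
    also have "\<dots> = R" unfolding R_def
    proof (rule prod.cong[OF refl])
      fix j assume j: "j \<in> {1..N}"
      have "(x j * y j)^2 = (x j)^2" using bcube_sq[OF y j] by (simp add: power_mult_distrib)
      then show "cmod (\<i> * complex_of_real (x j * y j) + 1) = sqrt (1 + (x j)^2)"
        by (simp add: cmod_def)
    qed
    finally show ?thesis .
  qed
  have "2^N * R = (\<Sum>y\<in>bcube N. cmod (P y))"
    using normP by (simp add: bcube_card)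
  also have "\<dots> \<le> (\<Sum>y\<in>bcube N. \<bar>Re (P y)\<bar> + \<bar>Im (P y)\<bar>)"
    by (rule sum_mono) (rule cmod_le)
  also have "\<dots> \<le> 2^N * C + 2^N * C" using add_mono[OF bRe bIm] by (simp only: sum.distrib)
  finally have "R \<le> 2 * C" by simp
  moreover have "R^2 = (\<Prod>j=1..N. 1 + (x j)^2)" unfolding R_def
    unfolding prod_power_distrib by (rule prod.cong) simp_all
  moreover have "R \<ge> 0" unfolding R_def by (simp add: prod_nonneg)
  ultimately have "(\<Prod>j=1..N. 1 + (x j)^2) \<le> (2*C)^2"
    by (metis power_mono)
  then show ?thesis using prod_ge_sum[of x N] by (simp add: power_mult_distrib)
qed


lemma harm_bound: "(\<Sum>n=1..N. 1 / real n) \<le> 1 + ln (real N)"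
proof (induction N)
  case 0 then show ?case by simp
next
  case (Suc N)
  show ?case
  proof (cases "N = 0")
    case True then show ?thesis by simp
  next
    case False
    then have Np: "real N > 0" by simp
    have "ln (real N / (real N + 1)) \<le> real N / (real N + 1) - 1"
      using Np by (intro ln_le_minus_one) simp
    also have "\<dots> = - 1 / (real N + 1)" using Np by (simp add: field_simps)
    finally have "1 / (real N + 1) \<le> ln (real N + 1) - ln (real N)"
      using Np by (simp add: ln_div)
    moreover have "(\<Sum>n=1..Suc N. 1/real n) = (\<Sum>n=1..N. 1/real n) + 1/(real N + 1)" by simp
    moreover have "real (Suc N) = real N + 1" by simp
    ultimately show ?thesis using Suc.IH by (simp only:)
  qed
qed

lemma abs_le_sq: "\<bar>a::real\<bar> \<le> 1 + a^2"
proof (cases "\<bar>a\<bar> \<le> 1")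
  case True then show ?thesis by (simp add: add_increasing2)
next
  case False
  then have "\<bar>a\<bar> * 1 \<le> \<bar>a\<bar> * \<bar>a\<bar>" by (intro mult_left_mono) auto
  then show ?thesis by (simp add: power2_eq_square abs_mult_self_eq)
qed


lemma exists_outside: "finite J \<Longrightarrow> \<exists>k::nat. k \<ge> 1 \<and> k \<notin> J"
proof -
  assume J: "finite J"
  define k where "k = Suc (Max (insert 0 J))"
  have "j \<le> Max (insert 0 J)" if "j \<in> J" for j using J that by simp
  then have "k \<notin> J" unfolding k_def using Suc_n_not_le_n by blast
  moreover have "k \<ge> 1" unfolding k_def by simp
  ultimately show ?thesis by blast
qed

context
  fixes x :: "nat \<Rightarrow> real" and B :: real
  assumes xB: "\<And>k. \<bar>x k\<bar> \<le> B"
begin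

lemma A_props:
  assumes J: "finite J"
  shows "{\<bar>x k\<bar> | k. k \<ge> 1 \<and> k \<notin> J} \<noteq> {}" "bdd_above {\<bar>x k\<bar> | k. k \<ge> 1 \<and> k \<notin> J}"
    "Sup {\<bar>x k\<bar> | k. k \<ge> 1 \<and> k \<notin> J} \<ge> 0"
proof -
  show ne: "{\<bar>x k\<bar> | k. k \<ge> 1 \<and> k \<notin> J} \<noteq> {}" using exists_outside[OF J] by blast
  show bd: "bdd_above {\<bar>x k\<bar> | k. k \<ge> 1 \<and> k \<notin> J}" using xB by (auto intro!: bdd_aboveI[of _ B])
  obtain k where "k \<ge> 1" "k \<notin> J" using exists_outside[OF J] by blast
  then have "\<bar>x k\<bar> \<le> Sup {\<bar>x k\<bar> | k. k \<ge> 1 \<and> k \<notin> J}" by (intro cSup_upper[OF _ bd]) blast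
  then show "Sup {\<bar>x k\<bar> | k. k \<ge> 1 \<and> k \<notin> J} \<ge> 0" by linarith
qed

lemma decr_nonneg:
  assumes "n \<ge> 1"
  shows "decr_rearr x n \<ge> 0"
  unfolding decr_rearr_def
proof (rule cInf_greatest)
  show "{Sup {\<bar>x k\<bar> | k. k \<ge> 1 \<and> k \<notin> J} | J. J \<subseteq> {1..} \<and> finite J \<and> card J < n} \<noteq> {}"
  proof -
    have "Sup {\<bar>x k\<bar> | k. k \<ge> 1 \<and> k \<notin> {}} \<in> {Sup {\<bar>x k\<bar> | k. k \<ge> 1 \<and> k \<notin> J} | J. J \<subseteq> {1..} \<and> finite J \<and> card J < n}"
      using assms by (intro CollectI exI[of _ "{}"]) simp
    then show ?thesis by blast
  qed
qed (use A_props(3) in auto)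

lemma decr_le:
  assumes "J \<subseteq> {1..}" "finite J" "card J < n"
  shows "decr_rearr x n \<le> Sup {\<bar>x k\<bar> | k. k \<ge> 1 \<and> k \<notin> J}"
  unfolding decr_rearr_def
proof (rule cInf_lower)
  show "Sup {\<bar>x k\<bar> | k. k \<ge> 1 \<and> k \<notin> J} \<in> {Sup {\<bar>x k\<bar> | k. k \<ge> 1 \<and> k \<notin> J} | J. J \<subseteq> {1..} \<and> finite J \<and> card J < n}"
    using assms by blast
  show "bdd_below {Sup {\<bar>x k\<bar> | k. k \<ge> 1 \<and> k \<notin> J} | J. J \<subseteq> {1..} \<and> finite J \<and> card J < n}"
    using A_props(3) by (auto intro: bdd_belowI[of _ 0])
qed

lemma decr_le_bound:
  assumes "J \<subseteq> {1..}" "finite J" "card J < n" "\<And>k. k \<ge> 1 \<Longrightarrow> k \<notin> J \<Longrightarrow> \<bar>x k\<bar> \<le> r"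
  shows "decr_rearr x n \<le> r"
proof -
  have "Sup {\<bar>x k\<bar> | k. k \<ge> 1 \<and> k \<notin> J} \<le> r"
    using A_props(1)[OF assms(2)] assms(4) by (intro cSup_least) auto
  with decr_le[OF assms(1-3)] show ?thesis by linarith
qed

end

theorem proposition6p13:
  fixes x :: "nat \<Rightarrow> real"
  assumes "x \<in> monB"
  shows "limsup (\<lambda>N. ereal ((\<Sum>n=1..N. (decr_rearr x n)\<^sup>2) / ln (real N))) \<le> 1"
proof -
  from assms obtain C where C: "C > 0" and H: "\<And>N f. (\<Sum>S\<in>Pow {1..N}. \<bar>walsh_coeff N f S * (\<Prod>n\<in>S. x n)\<bar>) \<le> C * supnorm N f"
    unfolding monB_def by blast
  define K where "K = 4 * C^2"
  define s where "s N = (\<Sum>j=1..N. (x j)^2)" for N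
  have sK: "s N \<le> K" for N using sum_sq_bound[OF H] C unfolding K_def s_def by auto
  define B where "B = 1 + K + \<bar>x 0\<bar>"
  have K0: "K \<ge> 0" unfolding K_def by simp
  have xB: "\<bar>x k\<bar> \<le> B" for k
  proof (cases "k = 0")
    case True then show ?thesis unfolding B_def using K0 by simp
  next
    case False
    have "(x k)^2 \<le> s k" unfolding s_def using False by (intro member_le_sum) auto
    then have "(x k)^2 \<le> K" using sK[of k] by linarith
    then show ?thesis using abs_le_sq[of "x k"] unfolding B_def by linarith
  qed
  have bdd: "bdd_above (range s)" using sK by (auto intro!: bdd_aboveI[of _ K])
  obtain M where M: "Sup (range s) - 1/4 < s M"
    using less_cSup_iff[of "range s" "Sup (range s) - 1/4"] bdd by auto
  have tail: "(\<Sum>k\<in>T. (x k)^2) < 1/4" if T: "finite T" "T \<subseteq> {M<..}" for T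
  proof -
    define L where "L = Max (insert M T)"
    have M_le_L: "M \<le> L" unfolding L_def using T by simp
    have sub: "T \<subseteq> {1..L} - {1..M}"
    proof
      fix k assume k: "k \<in> T"
      then have "k \<le> L" unfolding L_def using T by simp
      then show "k \<in> {1..L} - {1..M}" using k T by auto
    qed
    have "(\<Sum>k\<in>T. (x k)^2) \<le> (\<Sum>k\<in>{1..L} - {1..M}. (x k)^2)"
      using sub by (intro sum_mono2) auto
    also have "\<dots> = s L - s M" unfolding s_def using M_le_L by (subst sum_diff) auto
    also have "s L \<le> Sup (range s)" using bdd by (intro cSup_upper) auto
    finally show ?thesis using M by linarith
  qed
  have key: "(decr_rearr x n)^2 \<le> 1 / (2 * real n)" if n: "n \<ge> 1" "n \<ge> 2 * M" for n
  proof -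
    define Bn where "Bn = {k. k > M \<and> (x k)^2 > 1 / (2 * real n)}"
    have cardT: "2 * card T < n" if T: "finite T" "T \<subseteq> Bn" for T
    proof -
      have "real (card T) * (1 / (2 * real n)) \<le> (\<Sum>k\<in>T. (x k)^2)"
        using T unfolding Bn_def by (intro sum_bounded_below) auto
      also have "\<dots> < 1/4" using T unfolding Bn_def by (intro tail) auto
      finally have "real (card T) / (2 * real n) < 1/4" by simp
      then have "real (card T) * 4 < 2 * real n" using n by (simp add: field_simps)
      then show ?thesis by linarith
    qed
    have finB: "finite Bn"
    proof (rule ccontr)
      assume "infinite Bn"
      then obtain T where "finite T" "card T = n" "T \<subseteq> Bn" using infinite_arbitrarily_large by blast
      then show False using cardT by fastforce
    qed
    define J where "J = {1..M} \<union> Bn"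
    have "card J \<le> card {1..M} + card Bn" unfolding J_def by (rule card_Un_le)
    then have cJ: "card J < n" using cardT[OF finB order_refl] n by simp
    have J1: "J \<subseteq> {1..}" unfolding J_def Bn_def by auto
    have fJ: "finite J" unfolding J_def using finB by simp
    have "decr_rearr x n \<le> sqrt (1 / (2 * real n))"
    proof (rule decr_le_bound[OF xB J1 fJ cJ])
      fix k :: nat assume k: "k \<ge> 1" "k \<notin> J"
      then have "(x k)^2 \<le> 1 / (2 * real n)" unfolding J_def Bn_def by auto
      then show "\<bar>x k\<bar> \<le> sqrt (1 / (2 * real n))" by (intro real_le_rsqrt) simp
    qed
    moreover have "decr_rearr x n \<ge> 0" by (rule decr_nonneg[OF xB n(1)])
    ultimately have "(decr_rearr x n)^2 \<le> (sqrt (1 / (2 * real n)))^2" by (intro power_mono)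
    then show ?thesis by simp
  qed
  have dB: "(decr_rearr x n)^2 \<le> B^2" if n: "n \<ge> 1" for n
  proof -
    have "decr_rearr x n \<le> B" by (rule decr_le_bound[OF xB, of "{}"]) (use n xB in auto)
    moreover have "decr_rearr x n \<ge> 0" by (rule decr_nonneg[OF xB n])
    ultimately show ?thesis by (intro power_mono)
  qed
  define A where "A = real (2 * M) * B^2 + 1/2"
  have sumb: "(\<Sum>n=1..N. (decr_rearr x n)^2) \<le> A + ln (real N) / 2" for N
  proof -
    have "(\<Sum>n=1..N. (decr_rearr x n)^2) \<le> (\<Sum>n=1..N. (if n < 2 * M then B^2 else 0) + 1 / 2 * (1 / real n))"
    proof (rule sum_mono)
      fix n assume "n \<in> {1..N}"
      then have n1: "n \<ge> 1" by simp
      show "(decr_rearr x n)^2 \<le> (if n < 2 * M then B^2 else 0) + 1 / 2 * (1 / real n)"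
      proof (cases "n < 2 * M")
        case True
        have "0 \<le> 1 / (2 * real n)" by simp
        then have "(decr_rearr x n)^2 \<le> B^2 + 1 / (2 * real n)" using dB[OF n1] by linarith
        then show ?thesis using True by simp
      next
        case False
        then show ?thesis using key[OF n1] by simp
      qed
    qed
    also have "\<dots> = (\<Sum>n=1..N. (if n < 2 * M then B^2 else 0)) + 1/2 * (\<Sum>n=1..N. 1 / real n)"
      by (simp add: sum.distrib sum_distrib_left)
    also have "(\<Sum>n=1..N. (if n < 2 * M then B^2 else 0)) = (\<Sum>n\<in>{n\<in>{1..N}. n < 2 * M}. B^2)"
      by (rule sum.inter_filter[symmetric]) simp
    also have "\<dots> \<le> (\<Sum>n\<in>{..<2*M}. B^2)" by (intro sum_mono2) auto
    also have "\<dots> = real (2 * M) * B^2" by simp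
    finally show ?thesis using harm_bound[of N] unfolding A_def by linarith
  qed
  have ev: "eventually (\<lambda>N. ereal ((\<Sum>n=1..N. (decr_rearr x n)\<^sup>2) / ln (real N)) \<le> 1) sequentially"
    unfolding eventually_sequentially
  proof (intro exI allI impI)
    fix N assume N: "N \<ge> nat \<lceil>exp (2 * A)\<rceil>"
    have "real N \<ge> exp (2 * A)" using N by linarith
    then have lnN: "ln (real N) \<ge> 2 * A" by (metis exp_gt_zero ln_exp ln_le_cancel_iff order_less_le_trans)
    have A1: "A \<ge> 1/2" unfolding A_def by simp
    have lp: "ln (real N) > 0" using lnN A1 by linarith
    have "(\<Sum>n=1..N. (decr_rearr x n)\<^sup>2) \<le> ln (real N)" using sumb[of N] lnN by linarith
    then have "(\<Sum>n=1..N. (decr_rearr x n)\<^sup>2) / ln (real N) \<le> 1" using lp by simp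
    then show "ereal ((\<Sum>n=1..N. (decr_rearr x n)\<^sup>2) / ln (real N)) \<le> 1" by simp
  qed
  show ?thesis by (rule Limsup_bounded[OF ev])
qed

end
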